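(* Let $m,n\ge0$ be integers and $\Gamma={\rm SR}(m,n)$. (i) Any two adjacent vertices $u,v$ uniquely determine three cliques $C_1,C_2,C_3$, where $C_i$ is the unique largest clique of type $i$ containing $u$ and $v$, such that $C_i\cap C_j=\{u,v\}$ for distinct $i,j\in\{1,2,3\}$, and $C_1\cup C_2\cup C_3$ contains all common neighbours of $u$ and $v$. (ii) Fix a vertex $u$ and let $U$ be its set of neighbours. For each $i\in\{1,2,3\}$, the maximal cliques of type $i$ containing $u$, with $u$ removed, form a partition of $U$. Each edge of the subgraph induced on $U$ is contained in a unique such clique (among all three types), and hence has a unique type. (iii) $\Gamma$ does not contain an induced subgraph isomorphic to the complete tripartite graph $K_{1,1,4}$.
   Context: $\mathbb{N}=\{0,1,2,\dots\}$; $e_i$ is the $i$-th standard unit vector. ${\rm SR}(m,n)$ has as vertices the vectors in $\mathbb{N}^m$ with coordinate sum $n$, two being adjacent when they differ in precisely two coordinates. Every clique is of (at least) one of three types: type 1: all pairs of distinct vertices in the clique differ exactly in coordinates $j,k$ for one fixed pair $j\ne k$; type 2: the clique is $\{x+ae_i: i\in I\}$ with $1\le a\le n$, $x\in\mathbb{N}^m$ of coordinate sum $n-a$, $I\subseteq\{1,\dots,m\}$; type 3: the clique is $\{x-ae_i:i\in I\}$ with $a\ge1$, $x\in\mathbb{N}^m$ of coordinate sum $n+a$, $I\subseteq\{1,\dots,m\}$, $x_i\ge a$ for $i\in I$. *)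

theory Defs
  imports Main
begin

text \<open>Vertices of SR(m,n): vectors in N^m, represented as functions nat => nat
  supported on {0..<m} (coordinates are indexed 0..m-1), with coordinate sum n.\<close>

definition in_Nm :: "nat \<Rightarrow> (nat \<Rightarrow> nat) \<Rightarrow> bool" where
  "in_Nm m x \<longleftrightarrow> (\<forall>i\<ge>m. x i = 0)"

definition sr_vert :: "nat \<Rightarrow> nat \<Rightarrow> (nat \<Rightarrow> nat) \<Rightarrow> bool" where
  "sr_vert m n x \<longleftrightarrow> in_Nm m x \<and> (\<Sum>i<m. x i) = n"

definition sr_adj :: "nat \<Rightarrow> nat \<Rightarrow> (nat \<Rightarrow> nat) \<Rightarrow> (nat \<Rightarrow> nat) \<Rightarrow> bool" where
  "sr_adj m n x y \<longleftrightarrow> sr_vert m n x \<and> sr_vert m n y \<and> card {i. x i \<noteq> y i} = 2"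

definition sr_clique :: "nat \<Rightarrow> nat \<Rightarrow> (nat \<Rightarrow> nat) set \<Rightarrow> bool" where
  "sr_clique m n C \<longleftrightarrow> (\<forall>x\<in>C. sr_vert m n x) \<and>
     (\<forall>x\<in>C. \<forall>y\<in>C. x \<noteq> y \<longrightarrow> sr_adj m n x y)"

definition add_e :: "(nat \<Rightarrow> nat) \<Rightarrow> nat \<Rightarrow> nat \<Rightarrow> (nat \<Rightarrow> nat)" where
  "add_e x a i = (\<lambda>j. if j = i then x j + a else x j)"

definition sub_e :: "(nat \<Rightarrow> nat) \<Rightarrow> nat \<Rightarrow> nat \<Rightarrow> (nat \<Rightarrow> nat)" where
  "sub_e x a i = (\<lambda>j. if j = i then x j - a else x j)"

definition clique_type1 :: "nat \<Rightarrow> nat \<Rightarrow> (nat \<Rightarrow> nat) set \<Rightarrow> bool" where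
  "clique_type1 m n C \<longleftrightarrow> sr_clique m n C \<and>
     (\<exists>j k. j \<noteq> k \<and> j < m \<and> k < m \<and>
        (\<forall>x\<in>C. \<forall>y\<in>C. x \<noteq> y \<longrightarrow> {i. x i \<noteq> y i} = {j, k}))"

definition clique_type2 :: "nat \<Rightarrow> nat \<Rightarrow> (nat \<Rightarrow> nat) set \<Rightarrow> bool" where
  "clique_type2 m n C \<longleftrightarrow> sr_clique m n C \<and>
     (\<exists>a x I. 1 \<le> a \<and> a \<le> n \<and> in_Nm m x \<and> (\<Sum>i<m. x i) = n - a \<and>
        I \<subseteq> {..<m} \<and> C = (\<lambda>i. add_e x a i) ` I)"

definition clique_type3 :: "nat \<Rightarrow> nat \<Rightarrow> (nat \<Rightarrow> nat) set \<Rightarrow> bool" where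
  "clique_type3 m n C \<longleftrightarrow> sr_clique m n C \<and>
     (\<exists>a x I. 1 \<le> a \<and> in_Nm m x \<and> (\<Sum>i<m. x i) = n + a \<and>
        I \<subseteq> {..<m} \<and> (\<forall>i\<in>I. a \<le> x i) \<and> C = (\<lambda>i. sub_e x a i) ` I)"

definition clique_type :: "nat \<Rightarrow> nat \<Rightarrow> nat \<Rightarrow> (nat \<Rightarrow> nat) set \<Rightarrow> bool" where
  "clique_type m n t C \<longleftrightarrow>
     (t = 1 \<and> clique_type1 m n C) \<or> (t = 2 \<and> clique_type2 m n C) \<or> (t = 3 \<and> clique_type3 m n C)"

definition unique_largest_clique ::
  "nat \<Rightarrow> nat \<Rightarrow> nat \<Rightarrow> (nat \<Rightarrow> nat) \<Rightarrow> (nat \<Rightarrow> nat) \<Rightarrow> (nat \<Rightarrow> nat) set \<Rightarrow> bool" where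
  "unique_largest_clique m n t u v C \<longleftrightarrow> clique_type m n t C \<and> u \<in> C \<and> v \<in> C \<and>
     (\<forall>D. clique_type m n t D \<and> u \<in> D \<and> v \<in> D \<longrightarrow>
        card D \<le> card C \<and> (card D = card C \<longrightarrow> D = C))"

definition maximal_clique_at ::
  "nat \<Rightarrow> nat \<Rightarrow> nat \<Rightarrow> (nat \<Rightarrow> nat) \<Rightarrow> (nat \<Rightarrow> nat) set \<Rightarrow> bool" where
  "maximal_clique_at m n t u C \<longleftrightarrow> clique_type m n t C \<and> u \<in> C \<and>
     (\<forall>D. clique_type m n t D \<and> C \<subseteq> D \<longrightarrow> D = C)"

end

theory Submission imports Defs begin

lemma add_e_app[simp]: "add_e x a i l = (if l = i then x l + a else x l)" by (simp add: add_e_def)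
lemma sub_e_app[simp]: "sub_e x a i l = (if l = i then x l - a else x l)" by (simp add: sub_e_def)

lemma sum_one: assumes "j < (m::nat)" shows "(\<Sum>i<m. f i) = f j + (\<Sum>i\<in>{..<m}-{j}. f i)"
  by (rule sum.remove) (use assms in auto)

lemma sum_two: assumes "j<(m::nat)" "k<m" "j\<noteq>k"
  shows "(\<Sum>i<m. f i) = f j + f k + (\<Sum>i\<in>{..<m}-{j,k}. f i)"
proof -
  have "(\<Sum>i<m. f i) = f j + (\<Sum>i\<in>{..<m}-{j}. f i)" by (rule sum.remove) (use assms in auto)
  also have "(\<Sum>i\<in>{..<m}-{j}. f i) = f k + (\<Sum>i\<in>{..<m}-{j}-{k}. f i)"
    by (rule sum.remove) (use assms in auto)
  also have "{..<m}-{j}-{k} = {..<m}-{j,k}" by auto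
  finally show ?thesis by (simp add: add.assoc)
qed

lemma rest_eq: assumes "\<forall>i. i\<noteq>j \<and> i\<noteq>k \<longrightarrow> w i = u i"
  shows "(\<Sum>i\<in>{..<m}-{j,k}. w i) = (\<Sum>i\<in>{..<m}-{j,k}. u i)"
  by (rule sum.cong) (use assms in auto)

lemma agree_vert: assumes "sr_vert m n u" "j<m" "k<m" "j\<noteq>k"
  "\<forall>i. i\<noteq>j \<and> i\<noteq>k \<longrightarrow> w i = u i" "w j + w k = u j + u k" shows "sr_vert m n w"
proof -
  have "in_Nm m w" using assms unfolding sr_vert_def in_Nm_def by (metis not_le)
  moreover have "(\<Sum>i<m. w i) = n" using sum_two[of j m k w] sum_two[of j m k u] rest_eq[OF assms(5)] assms
    by (simp add: sr_vert_def)
  ultimately show ?thesis by (simp add: sr_vert_def)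
qed

lemma agree_sum: assumes "sr_vert m n u" "sr_vert m n w" "j<m" "k<m" "j\<noteq>k"
  "\<forall>i. i\<noteq>j \<and> i\<noteq>k \<longrightarrow> w i = u i" shows "w j + w k = u j + u k"
  using sum_two[of j m k w] sum_two[of j m k u] rest_eq[OF assms(6)] assms
  by (simp add: sr_vert_def)

lemma diff_lt: "in_Nm m u \<Longrightarrow> in_Nm m w \<Longrightarrow> u i \<noteq> w i \<Longrightarrow> i < m"
  unfolding in_Nm_def by (metis not_le)

lemma adj_D: assumes "sr_adj m n u w"
  shows "\<exists>p q. p\<noteq>q \<and> (\<forall>i. u i \<noteq> w i \<longleftrightarrow> i = p \<or> i = q)"
proof -
  have "card {i. u i \<noteq> w i} = 2" using assms by (simp add: sr_adj_def)
  then obtain p q where "{i. u i \<noteq> w i} = {p,q}" "p\<noteq>q" by (auto simp: card_2_iff)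
  then show ?thesis by (metis (mono_tags, lifting) insert_iff mem_Collect_eq singletonD)
qed

lemma adj_sum: assumes "sr_vert m n u" "sr_vert m n w" "p\<noteq>q" "\<forall>i. u i \<noteq> w i \<longleftrightarrow> i = p \<or> i = q"
  shows "p<m \<and> q<m \<and> u p + u q = w p + w q"
proof -
  have pm: "p<m" "q<m" using assms diff_lt unfolding sr_vert_def by blast+
  have "\<forall>i. i\<noteq>p \<and> i\<noteq>q \<longrightarrow> w i = u i" using assms(4) by metis
  then show ?thesis using agree_sum[OF assms(1,2) pm assms(3)] pm by simp
qed

lemma mk_adj: assumes "sr_vert m n u" "sr_vert m n w" "p\<noteq>q" "\<forall>i. u i \<noteq> w i \<longleftrightarrow> i = p \<or> i = q"
  shows "sr_adj m n u w"
proof -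
  have "{i. u i \<noteq> w i} = {p,q}" using assms(4) by auto
  then show ?thesis using assms by (simp add: sr_adj_def)
qed

lemma adj_irr: "\<not> sr_adj m n x x" by (simp add: sr_adj_def)

lemma add_vert: assumes "in_Nm m x" "i<m"
  shows "in_Nm m (add_e x a i) \<and> (\<Sum>l<m. add_e x a i l) = (\<Sum>l<m. x l) + a"
proof
  show "in_Nm m (add_e x a i)" using assms by (auto simp: in_Nm_def)
  have "(\<Sum>l\<in>{..<m}-{i}. add_e x a i l) = (\<Sum>l\<in>{..<m}-{i}. x l)" by (rule sum.cong) auto
  then show "(\<Sum>l<m. add_e x a i l) = (\<Sum>l<m. x l) + a"
    using sum_one[OF assms(2), of "add_e x a i"] sum_one[OF assms(2), of x] by simp
qed

lemma sub_vert: assumes "in_Nm m x" "i<m" "a \<le> x i"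
  shows "in_Nm m (sub_e x a i) \<and> (\<Sum>l<m. sub_e x a i l) = (\<Sum>l<m. x l) - a"
proof
  show "in_Nm m (sub_e x a i)" using assms by (auto simp: in_Nm_def)
  have "(\<Sum>l\<in>{..<m}-{i}. sub_e x a i l) = (\<Sum>l\<in>{..<m}-{i}. x l)" by (rule sum.cong) auto
  then show "(\<Sum>l<m. sub_e x a i l) = (\<Sum>l<m. x l) - a"
    using sum_one[OF assms(2), of "sub_e x a i"] sum_one[OF assms(2), of x] assms(3) by simp
qed

lemma coord_le: "sr_vert m n u \<Longrightarrow> j < m \<Longrightarrow> u j \<le> n"
  unfolding sr_vert_def using sum_one[of j m u] by simp

locale ap =
  fixes m n :: nat and u v :: "nat \<Rightarrow> nat" and j k d :: nat
  assumes U: "sr_vert m n u" and V: "sr_vert m n v"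
  and jm: "j<m" and km: "k<m" and jk: "j\<noteq>k" and d1: "1 \<le> d" and dj: "d \<le> u j"
  and vj: "v j = u j - d" and vk: "v k = u k + d" and vo: "\<forall>i. i\<noteq>j \<and> i\<noteq>k \<longrightarrow> v i = u i"
begin

definition "x2 = sub_e u d j"
definition "y3 = add_e u d k"
definition "L = (\<lambda>c. \<lambda>i. if i = j then c else if i = k then u j + u k - c else u i) ` {0..u j + u k}"
definition "C2 = (\<lambda>i. add_e x2 d i) ` {..<m}"
definition "C3 = (\<lambda>i. sub_e y3 d i) ` {i. i<m \<and> d \<le> y3 i}"

lemma memL: "w \<in> L \<longleftrightarrow> sr_vert m n w \<and> (\<forall>i. i\<noteq>j \<and> i\<noteq>k \<longrightarrow> w i = u i)"
proof
  assume "w \<in> L"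
  then obtain c where c: "c \<le> u j + u k" "w = (\<lambda>i. if i = j then c else if i = k then u j + u k - c else u i)"
    unfolding L_def by auto
  have ag: "\<forall>i. i\<noteq>j \<and> i\<noteq>k \<longrightarrow> w i = u i" using c by simp
  moreover have "sr_vert m n w" by (rule agree_vert[OF U jm km jk ag]) (use c jk in simp)
  ultimately show "sr_vert m n w \<and> (\<forall>i. i\<noteq>j \<and> i\<noteq>k \<longrightarrow> w i = u i)" by simp
next
  assume a: "sr_vert m n w \<and> (\<forall>i. i\<noteq>j \<and> i\<noteq>k \<longrightarrow> w i = u i)"
  then have s: "w j + w k = u j + u k" using agree_sum[OF U _ jm km jk] by blast
  have "w = (\<lambda>i. if i = j then w j else if i = k then u j + u k - w j else u i)"
    using a s by (auto simp: fun_eq_iff)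
  moreover have "w j \<in> {0..u j + u k}" using s by simp
  ultimately show "w \<in> L" unfolding L_def by blast
qed

lemma Lsum: "w \<in> L \<Longrightarrow> w j + w k = u j + u k"
  using memL agree_sum[OF U _ jm km jk] by blast

lemma uL: "u \<in> L" using memL U by simp
lemma vL: "v \<in> L" using memL V vo by simp

lemma unj: "u j \<le> n" using coord_le[OF U jm] .

lemma x2v: "in_Nm m x2 \<and> (\<Sum>l<m. x2 l) = n - d"
  using sub_vert[of m u j d] U jm dj unfolding x2_def sr_vert_def by simp
lemma y3v: "in_Nm m y3 \<and> (\<Sum>l<m. y3 l) = n + d"
  using add_vert[of m u k d] U km unfolding y3_def sr_vert_def by simp

lemma C2vert: "i < m \<Longrightarrow> sr_vert m n (add_e x2 d i)"
  using add_vert[of m x2 i d] x2v unj dj unfolding sr_vert_def by simp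
lemma C3vert: "i < m \<Longrightarrow> d \<le> y3 i \<Longrightarrow> sr_vert m n (sub_e y3 d i)"
  using sub_vert[of m y3 i d] y3v unfolding sr_vert_def by simp

lemma typeL: "clique_type1 m n L"
proof -
  have D: "\<forall>i. x i \<noteq> y i \<longleftrightarrow> i = j \<or> i = k" if x: "x \<in> L" and y: "y \<in> L" and ne: "x \<noteq> y" for x y
  proof
    fix i
    have ax: "\<forall>i. i\<noteq>j \<and> i\<noteq>k \<longrightarrow> x i = u i" using x unfolding memL by blast
    have ay: "\<forall>i. i\<noteq>j \<and> i\<noteq>k \<longrightarrow> y i = u i" using y unfolding memL by blast
    have sx: "x j + x k = y j + y k" using Lsum[OF x] Lsum[OF y] by simp
    have "x j \<noteq> y j"
    proof
      assume e: "x j = y j"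
      then have "x k = y k" using sx by simp
      then have "\<forall>i. x i = y i" using ax ay e by metis
      then show False using ne by (simp add: fun_eq_iff)
    qed
    then have "x k \<noteq> y k" using sx by simp
    consider "i = j" | "i = k" | "i \<noteq> j" "i \<noteq> k" by blast
    then show "x i \<noteq> y i \<longleftrightarrow> i = j \<or> i = k"
    proof cases
      case 1 then show ?thesis using \<open>x j \<noteq> y j\<close> by simp
    next
      case 2 then show ?thesis using \<open>x k \<noteq> y k\<close> by simp
    next
      case 3 then show ?thesis using ax ay by simp
    qed
  qed
  have V: "sr_vert m n x" if "x \<in> L" for x using that unfolding memL by blast
  have A: "sr_adj m n x y" if "x \<in> L" "y \<in> L" "x \<noteq> y" for x y
    using mk_adj[OF V[OF that(1)] V[OF that(2)] jk D[OF that]] .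
  have E: "{i. x i \<noteq> y i} = {j, k}" if "x \<in> L" "y \<in> L" "x \<noteq> y" for x y
    using D[OF that] by blast
  show ?thesis unfolding clique_type1_def sr_clique_def
    using V A E jk jm km by blast
qed

lemma typeC2: "clique_type2 m n C2"
proof -
  have "\<forall>x\<in>C2. \<forall>y\<in>C2. x \<noteq> y \<longrightarrow> sr_adj m n x y"
  proof (intro ballI impI)
    fix x y assume "x \<in> C2" "y \<in> C2" "x \<noteq> y"
    then obtain i1 i2 where "i1<m" "i2<m" "x = add_e x2 d i1" "y = add_e x2 d i2" "i1 \<noteq> i2"
      unfolding C2_def by auto
    then show "sr_adj m n x y" using mk_adj[OF C2vert C2vert, of i1 i2 i1 i2] d1 by auto
  qed
  moreover have "\<forall>x\<in>C2. sr_vert m n x" using C2vert unfolding C2_def by auto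
  ultimately show ?thesis unfolding clique_type2_def sr_clique_def
    using d1 dj unj x2v unfolding C2_def by (intro conjI exI[of _ d] exI[of _ x2] exI[of _ "{..<m}"]) auto
qed

lemma typeC3: "clique_type3 m n C3"
proof -
  have "\<forall>x\<in>C3. \<forall>y\<in>C3. x \<noteq> y \<longrightarrow> sr_adj m n x y"
  proof (intro ballI impI)
    fix x y assume "x \<in> C3" "y \<in> C3" "x \<noteq> y"
    then obtain i1 i2 where a: "i1<m" "i2<m" "d \<le> y3 i1" "d \<le> y3 i2" and xy: "x = sub_e y3 d i1" "y = sub_e y3 d i2" and ne: "i1 \<noteq> i2"
      unfolding C3_def by auto
    have "\<forall>i. (sub_e y3 d i1 i \<noteq> sub_e y3 d i2 i) \<longleftrightarrow> i = i1 \<or> i = i2"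
      using a ne d1 by auto
    from mk_adj[OF C3vert[OF a(1,3)] C3vert[OF a(2,4)] ne this] show "sr_adj m n x y" unfolding xy .
  qed
  moreover have "\<forall>x\<in>C3. sr_vert m n x" using C3vert unfolding C3_def by auto
  ultimately show ?thesis unfolding clique_type3_def sr_clique_def
    using d1 y3v unfolding C3_def by (intro conjI exI[of _ d] exI[of _ y3] exI[of _ "{i. i<m \<and> d \<le> y3 i}"]) auto
qed

lemma uC2: "u \<in> C2" and vC2: "v \<in> C2"
proof -
  have "u = add_e x2 d j" using dj by (auto simp: fun_eq_iff x2_def)
  then show "u \<in> C2" using jm unfolding C2_def by auto
  have "v = add_e x2 d k" using vj vk vo jk by (auto simp: fun_eq_iff x2_def)
  then show "v \<in> C2" using km unfolding C2_def by auto
qed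

lemma uC3: "u \<in> C3" and vC3: "v \<in> C3"
proof -
  have "u = sub_e y3 d k" by (auto simp: fun_eq_iff y3_def)
  moreover have "d \<le> y3 k" by (simp add: y3_def)
  ultimately show "u \<in> C3" using km unfolding C3_def by auto
  have "v = sub_e y3 d j" using vj vk vo jk by (auto simp: fun_eq_iff y3_def)
  moreover have "d \<le> y3 j" using dj jk by (simp add: y3_def)
  ultimately show "v \<in> C3" using jm unfolding C3_def by auto
qed


lemma uvD: "\<forall>i. u i \<noteq> v i \<longleftrightarrow> i = j \<or> i = k"
proof
  fix i show "u i \<noteq> v i \<longleftrightarrow> i = j \<or> i = k"
    using vj vk vo d1 dj jk by (cases "i = j"; cases "i = k") auto
qed

lemma uv: "u \<noteq> v"
proof assume "u = v" then show False using vk d1 by simp qed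

lemma sub1: assumes "clique_type1 m n D" "u \<in> D" "v \<in> D" shows "D \<subseteq> L"
proof
  fix w assume w: "w \<in> D"
  obtain j' k' where jk': "\<forall>x\<in>D. \<forall>y\<in>D. x \<noteq> y \<longrightarrow> {i. x i \<noteq> y i} = {j', k'}"
    using assms(1) unfolding clique_type1_def by blast
  have cl: "sr_clique m n D" using assms(1) unfolding clique_type1_def by blast
  have "{i. u i \<noteq> v i} = {j', k'}" using jk' assms uv by blast
  moreover have "{i. u i \<noteq> v i} = {j, k}" using uvD by blast
  ultimately have e: "{j',k'} = {j,k}" by simp
  show "w \<in> L"
  proof (cases "w = u")
    case True then show ?thesis using uL by simp
  next
    case False
    then have eq: "{i. u i \<noteq> w i} = {j, k}" using jk'[rule_format, OF assms(2) w] e by simp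
    have "\<forall>i. i\<noteq>j \<and> i\<noteq>k \<longrightarrow> w i = u i"
    proof (intro allI impI)
      fix i assume "i\<noteq>j \<and> i\<noteq>k" then have "i \<notin> {i. u i \<noteq> w i}" using eq by simp
      then show "w i = u i" by simp
    qed
    moreover have "sr_vert m n w" using cl w unfolding sr_clique_def by blast
    ultimately show ?thesis unfolding memL by blast
  qed
qed

lemma sub2: assumes "clique_type2 m n D" "u \<in> D" "v \<in> D" shows "D \<subseteq> C2"
proof -
  obtain a x' I where a: "1 \<le> a" "I \<subseteq> {..<m}" and D: "D = (\<lambda>i. add_e x' a i) ` I"
    using assms(1) unfolding clique_type2_def by blast
  obtain i1 where i1: "i1 \<in> I" "u = add_e x' a i1" using assms(2) D by blast
  obtain i2 where i2: "i2 \<in> I" "v = add_e x' a i2" using assms(3) D by blast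
  have ne: "i1 \<noteq> i2" using i1 i2 uv by blast
  have u1: "u i1 = x' i1 + a" "v i1 = x' i1" using i1 i2 ne by simp_all
  have u2: "v i2 = x' i2 + a" "u i2 = x' i2" using i1 i2 ne by simp_all
  have "v i1 < u i1" using u1 a by linarith
  then have "i1 = j \<or> i1 = k" using uvD[rule_format, of i1] by simp
  moreover have "i1 \<noteq> k" using \<open>v i1 < u i1\<close> vk by auto
  ultimately have "i1 = j" by simp
  have "u i2 < v i2" using u2 a by linarith
  then have "i2 = j \<or> i2 = k" using uvD[rule_format, of i2] by simp
  moreover have "i2 \<noteq> j" using \<open>u i2 < v i2\<close> vj by auto
  ultimately have "i2 = k" by simp
  have ad: "a = d" using u1 vj dj \<open>i1 = j\<close> by simp
  have "x' = x2"
  proof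
    fix l show "x' l = x2 l"
      using i1(2) ad \<open>i1 = j\<close> unfolding x2_def by (cases "l = j") (auto simp: fun_eq_iff)
  qed
  then show ?thesis unfolding D C2_def using a ad by auto
qed

lemma sub3: assumes "clique_type3 m n D" "u \<in> D" "v \<in> D" shows "D \<subseteq> C3"
proof -
  obtain a y' I where a: "1 \<le> a" "I \<subseteq> {..<m}" "\<forall>i\<in>I. a \<le> y' i" and D: "D = (\<lambda>i. sub_e y' a i) ` I"
    using assms(1) unfolding clique_type3_def by blast
  obtain i1 where i1: "i1 \<in> I" "u = sub_e y' a i1" using assms(2) D by blast
  obtain i2 where i2: "i2 \<in> I" "v = sub_e y' a i2" using assms(3) D by blast
  have ne: "i1 \<noteq> i2" using i1 i2 uv by blast
  have le: "a \<le> y' i1" "a \<le> y' i2" using a i1 i2 by auto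
  have u1: "u i1 = y' i1 - a" "v i1 = y' i1" using i1 i2 ne by simp_all
  have u2: "v i2 = y' i2 - a" "u i2 = y' i2" using i1 i2 ne by simp_all
  have "u i1 < v i1" using u1 le a by linarith
  then have "i1 = j \<or> i1 = k" using uvD[rule_format, of i1] by simp
  moreover have "i1 \<noteq> j" using \<open>u i1 < v i1\<close> vj by auto
  ultimately have "i1 = k" by simp
  have "v i2 < u i2" using u2 le a by linarith
  then have "i2 = j \<or> i2 = k" using uvD[rule_format, of i2] by simp
  moreover have "i2 \<noteq> k" using \<open>v i2 < u i2\<close> vk by auto
  ultimately have "i2 = j" by simp
  have ad: "a = d" using u1 vk le \<open>i1 = k\<close> by simp
  have "y' = y3"
  proof
    fix l show "y' l = y3 l"
      using i1(2) ad \<open>i1 = k\<close> le(1) unfolding y3_def by (cases "l = k") (auto simp: fun_eq_iff)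
  qed
  then show ?thesis unfolding D C3_def using a ad by auto
qed


lemma uE: "u = add_e x2 d j" using dj by (auto simp: fun_eq_iff x2_def)
lemma vE: "v = add_e x2 d k" using vj vk vo jk by (auto simp: fun_eq_iff x2_def)
lemma uE3: "u = sub_e y3 d k" by (auto simp: fun_eq_iff y3_def)
lemma vE3: "v = sub_e y3 d j" using vj vk vo jk by (auto simp: fun_eq_iff y3_def)

lemma int12: "L \<inter> C2 \<subseteq> {u,v}"
proof
  fix w assume w: "w \<in> L \<inter> C2"
  then obtain i where i: "i<m" "w = add_e x2 d i" unfolding C2_def by auto
  show "w \<in> {u,v}"
  proof (cases "i = j \<or> i = k")
    case True then show ?thesis using i uE vE by auto
  next
    case False
    then have "w i = u i + d" using i by (simp add: x2_def)
    moreover have "w i = u i" using IntD1[OF w] False unfolding memL by blast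
    ultimately show ?thesis using d1 by simp
  qed
qed

lemma int13: "L \<inter> C3 \<subseteq> {u,v}"
proof
  fix w assume w: "w \<in> L \<inter> C3"
  then obtain i where i: "i<m" "d \<le> y3 i" "w = sub_e y3 d i" unfolding C3_def by auto
  show "w \<in> {u,v}"
  proof (cases "i = j \<or> i = k")
    case True then show ?thesis using i uE3 vE3 by auto
  next
    case False
    then have "w i = u i - d" "d \<le> u i" using i by (simp_all add: y3_def)
    moreover have "w i = u i" using IntD1[OF w] False unfolding memL by blast
    ultimately show ?thesis using d1 by simp
  qed
qed

lemma int23: "C2 \<inter> C3 \<subseteq> {u,v}"
proof
  fix w assume w: "w \<in> C2 \<inter> C3"
  then obtain i where i: "i<m" "w = add_e x2 d i" unfolding C2_def by auto
  obtain l where l: "l<m" "d \<le> y3 l" "w = sub_e y3 d l" using w unfolding C3_def by auto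
  show "w \<in> {u,v}"
  proof (cases "i = j \<or> i = k")
    case True then show ?thesis using i uE vE by auto
  next
    case False
    then have "w i = u i + d" using i by (simp add: x2_def)
    moreover have "w i = u i - d \<or> w i = u i" using l False by (simp add: y3_def split: if_splits)
    ultimately show ?thesis using d1 by auto
  qed
qed

lemma cn: assumes uw: "sr_adj m n u w" and vw: "sr_adj m n v w" shows "w \<in> L \<union> C2 \<union> C3"
proof -
  have W: "sr_vert m n w" using uw unfolding sr_adj_def by blast
  obtain p q where pq: "p\<noteq>q" "\<forall>l. u l \<noteq> w l \<longleftrightarrow> l = p \<or> l = q" using adj_D[OF uw] by blast
  have spq: "p<m" "q<m" "u p + u q = w p + w q" using adj_sum[OF U W pq] by auto
  obtain p' q' where pq': "p'\<noteq>q'" "\<forall>l. v l \<noteq> w l \<longleftrightarrow> l = p' \<or> l = q'" using adj_D[OF vw] by blast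
  show ?thesis
  proof (cases "(p = j \<or> p = k) \<and> (q = j \<or> q = k)")
    case True
    have "\<forall>l. l\<noteq>j \<and> l\<noteq>k \<longrightarrow> w l = u l"
    proof (intro allI impI)
      fix l assume "l\<noteq>j \<and> l\<noteq>k" then have "l \<noteq> p" "l \<noteq> q" using True by auto
      then show "w l = u l" using pq(2)[rule_format, of l] by auto
    qed
    then have "w \<in> L" unfolding memL using W by blast
    then show ?thesis by blast
  next
    case False
    obtain i r where ir: "i \<noteq> r" "i \<noteq> j" "i \<noteq> k" "\<forall>l. u l \<noteq> w l \<longleftrightarrow> l = i \<or> l = r"
      "u i + u r = w i + w r" "i < m"
    proof (cases "p = j \<or> p = k")
      case True
      then have "q \<noteq> j" "q \<noteq> k" using False by auto
      then show ?thesis using that[of q p] pq spq by auto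
    next
      case False
      then show ?thesis using that[of p q] pq spq by auto
    qed
    have "v i \<noteq> w i" using ir(4)[rule_format, of i] ir(2,3) vo by auto
    then have "i = p' \<or> i = q'" using pq'(2) by blast
    then obtain r' where r': "\<forall>l. v l \<noteq> w l \<longleftrightarrow> l = i \<or> l = r'"
      using pq'(2) by blast
    have ujv: "u j \<noteq> v j" "u k \<noteq> v k" using uvD by auto
    have rjk: "r = j \<or> r = k"
    proof (rule ccontr)
      assume "\<not> (r = j \<or> r = k)"
      then have "w j = u j" "w k = u k" using ir(4)[rule_format, of j] ir(4)[rule_format, of k] ir(2,3) by auto
      then have "v j \<noteq> w j" "v k \<noteq> w k" using ujv by auto
      then have "j = r'" "k = r'" using r'[rule_format, of j] r'[rule_format, of k] ir(2,3) by auto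
      then show False using jk by simp
    qed
    show ?thesis
    proof (cases "r = j")
      case True
      have wk: "w k = u k" using ir(4)[rule_format, of k] ir(3) True jk by auto
      then have "v k \<noteq> w k" using ujv by auto
      then have "k = r'" using r'[rule_format, of k] ir(3) by auto
      then have "w j = v j" using r'[rule_format, of j] ir(2) jk by auto
      then have wj: "w j = u j - d" using vj by simp
      have "u i + u j = w i + w j" using ir(5) True by simp
      then have wi: "w i = u i + d" using wj dj by linarith
      have "w = add_e x2 d i"
      proof
        fix l show "w l = add_e x2 d i l"
          using wi wj ir(4)[rule_format, of l] ir(2) True unfolding x2_def by (cases "l = i"; cases "l = j") auto
      qed
      then have "w \<in> C2" unfolding C2_def using ir by auto
      then show ?thesis by blast
    next
      case False
      then have Tk: "r = k" using rjk by simp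
      have wj: "w j = u j" using ir(4)[rule_format, of j] ir(2) Tk jk by auto
      then have "v j \<noteq> w j" using ujv by auto
      then have "j = r'" using r'[rule_format, of j] ir(2) by auto
      then have "w k = v k" using r'[rule_format, of k] ir(3) jk by auto
      then have wk: "w k = u k + d" using vk by simp
      have "u i + u k = w i + w k" using ir(5) Tk by simp
      then have wi: "w i = u i - d" "d \<le> u i" using wk by linarith+
      have "w = sub_e y3 d i"
      proof
        fix l show "w l = sub_e y3 d i l"
          using wi wk ir(4)[rule_format, of l] ir(3) Tk unfolding y3_def by (cases "l = i"; cases "l = k") auto
      qed
      moreover have "d \<le> y3 i" using wi ir unfolding y3_def by simp
      ultimately have "w \<in> C3" unfolding C3_def using ir by auto
      then show ?thesis by blast
    qed
  qed
qed


definition "Cf t = (if t = (1::nat) then L else if t = 2 then C2 else C3)"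

lemma ct_cases: "clique_type m n t D \<longleftrightarrow> (t = 1 \<and> clique_type1 m n D) \<or> (t = 2 \<and> clique_type2 m n D) \<or> (t = 3 \<and> clique_type3 m n D)"
  by (simp add: clique_type_def)

lemma Cf_type: "t \<in> {1,2,3} \<Longrightarrow> clique_type m n t (Cf t)"
  using typeL typeC2 typeC3 unfolding ct_cases Cf_def by auto

lemma Cf_uv: "u \<in> Cf t" "v \<in> Cf t"
  using uL vL uC2 vC2 uC3 vC3 unfolding Cf_def by auto

lemma Cf_fin: "finite (Cf t)"
proof -
  have "finite L" unfolding L_def by simp
  moreover have "finite C2" unfolding C2_def by simp
  moreover have "finite C3" unfolding C3_def by simp
  ultimately show ?thesis unfolding Cf_def by simp
qed

lemma Cf_sub: "clique_type m n t D \<Longrightarrow> u \<in> D \<Longrightarrow> v \<in> D \<Longrightarrow> D \<subseteq> Cf t"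
  unfolding ct_cases Cf_def using sub1[of D] sub2[of D] sub3[of D] by auto

lemma Cf_int: "s \<in> {1,2,3} \<Longrightarrow> t \<in> {1,2,3} \<Longrightarrow> s \<noteq> t \<Longrightarrow> Cf s \<inter> Cf t = {u,v}"
proof -
  assume a: "s \<in> {1,2,3}" "t \<in> {1,2,3}" "s \<noteq> t"
  have "Cf s \<inter> Cf t \<subseteq> {u,v}"
    using a int12 int13 int23 unfolding Cf_def by (auto simp: Int_commute)
  moreover have "{u,v} \<subseteq> Cf s \<inter> Cf t" using Cf_uv by auto
  ultimately show ?thesis by blast
qed

lemma Cf_cn: "sr_adj m n u w \<Longrightarrow> sr_adj m n v w \<Longrightarrow> w \<in> Cf 1 \<union> Cf 2 \<union> Cf 3"
  using cn unfolding Cf_def by auto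

lemma Cf_ul: "t \<in> {1,2,3} \<Longrightarrow> unique_largest_clique m n t u v (Cf t)"
  unfolding unique_largest_clique_def
  using Cf_type Cf_uv Cf_sub Cf_fin by (meson card_mono card_subset_eq)

lemma Cf_max: "t \<in> {1,2,3} \<Longrightarrow> maximal_clique_at m n t u (Cf t)"
  unfolding maximal_clique_at_def
  using Cf_type Cf_uv Cf_sub by (meson subset_antisym subsetD)

lemma max_eq: "maximal_clique_at m n t u C \<Longrightarrow> v \<in> C \<Longrightarrow> C = Cf t"
proof -
  assume a: "maximal_clique_at m n t u C" "v \<in> C"
  then have ct: "clique_type m n t C" "u \<in> C" unfolding maximal_clique_at_def by auto
  then have t: "t \<in> {1,2,3}" unfolding ct_cases by auto
  have "C \<subseteq> Cf t" using Cf_sub ct a(2) by blast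
  then show ?thesis using a(1) Cf_type[OF t] unfolding maximal_clique_at_def by blast
qed

end

lemma ct_clique: "clique_type m n t C \<Longrightarrow> sr_clique m n C"
  unfolding clique_type_def clique_type1_def clique_type2_def clique_type3_def by auto

lemma orient: assumes "sr_adj m n u v" shows "\<exists>j k d. ap m n u v j k d"
proof -
  have U: "sr_vert m n u" and V: "sr_vert m n v" using assms unfolding sr_adj_def by auto
  obtain p q where pq: "p\<noteq>q" "\<forall>l. u l \<noteq> v l \<longleftrightarrow> l = p \<or> l = q" using adj_D[OF assms] by blast
  have s: "p<m" "q<m" "u p + u q = v p + v q" using adj_sum[OF U V pq] by auto
  have np: "u p \<noteq> v p" "u q \<noteq> v q" using pq(2)[rule_format, of p] pq(2)[rule_format, of q] by auto
  have oth: "\<forall>i. i\<noteq>p \<and> i\<noteq>q \<longrightarrow> v i = u i"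
  proof (intro allI impI) fix i assume "i\<noteq>p \<and> i\<noteq>q" then show "v i = u i" using pq(2)[rule_format, of i] by auto qed
  show ?thesis
  proof (cases "v p < u p")
    case True
    have "ap m n u v p q (u p - v p)"
      using U V s pq(1) True np oth by unfold_locales auto
    then show ?thesis by blast
  next
    case False
    then have "v q < u q" using s np by linarith
    have "ap m n u v q p (u q - v q)"
      using U V s pq(1) \<open>v q < u q\<close> np oth by unfold_locales auto
    then show ?thesis by blast
  qed
qed


lemma pig1: "\<forall>x\<in>A. \<forall>y\<in>A. x \<noteq> y \<longrightarrow> R x y \<Longrightarrow> x \<in> A \<Longrightarrow> y \<in> A \<Longrightarrow> x \<noteq> y \<Longrightarrow> \<not> R x y \<Longrightarrow> False"
  by blast

lemma pig2:
  assumes A: "\<forall>x\<in>A. \<forall>y\<in>A. x \<noteq> y \<longrightarrow> R x y" and B: "\<forall>x\<in>B. \<forall>y\<in>B. x \<noteq> y \<longrightarrow> R x y"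
    and m: "c1 \<in> A \<union> B" "c2 \<in> A \<union> B" "c3 \<in> A \<union> B"
    and ne: "c1 \<noteq> c2" "c1 \<noteq> c3" "c2 \<noteq> c3" and nr: "\<not> R c1 c2" "\<not> R c1 c3" "\<not> R c2 c3"
  shows False
proof (cases "c1 \<in> A")
  case True
  have "c2 \<notin> A" using pig1[OF A True _ ne(1) nr(1)] by blast
  moreover have "c3 \<notin> A" using pig1[OF A True _ ne(2) nr(2)] by blast
  ultimately have "c2 \<in> B" "c3 \<in> B" using m by auto
  then show False using pig1[OF B _ _ ne(3) nr(3)] by blast
next
  case False
  then have c1: "c1 \<in> B" using m by auto
  have "c2 \<notin> B" using pig1[OF B c1 _ ne(1) nr(1)] by blast
  moreover have "c3 \<notin> B" using pig1[OF B c1 _ ne(2) nr(2)] by blast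
  ultimately have "c2 \<in> A" "c3 \<in> A" using m by auto
  then show False using pig1[OF A _ _ ne(3) nr(3)] by blast
qed

lemma pig3:
  assumes A: "\<forall>x\<in>A. \<forall>y\<in>A. x \<noteq> y \<longrightarrow> R x y" and B: "\<forall>x\<in>B. \<forall>y\<in>B. x \<noteq> y \<longrightarrow> R x y"
    and C: "\<forall>x\<in>C. \<forall>y\<in>C. x \<noteq> y \<longrightarrow> R x y"
    and c1: "c1 \<in> A"
    and m: "c2 \<in> A \<union> B \<union> C" "c3 \<in> A \<union> B \<union> C" "c4 \<in> A \<union> B \<union> C"
    and ne: "c1 \<noteq> c2" "c1 \<noteq> c3" "c1 \<noteq> c4" "c2 \<noteq> c3" "c2 \<noteq> c4" "c3 \<noteq> c4"
    and nr: "\<not> R c1 c2" "\<not> R c1 c3" "\<not> R c1 c4" "\<not> R c2 c3" "\<not> R c2 c4" "\<not> R c3 c4"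
  shows False
proof -
  have "c2 \<notin> A" using pig1[OF A c1 _ ne(1) nr(1)] by blast
  moreover have "c3 \<notin> A" using pig1[OF A c1 _ ne(2) nr(2)] by blast
  moreover have "c4 \<notin> A" using pig1[OF A c1 _ ne(3) nr(3)] by blast
  ultimately have "c2 \<in> B \<union> C" "c3 \<in> B \<union> C" "c4 \<in> B \<union> C" using m by auto
  from pig2[OF B C this ne(4,5,6) nr(4,5,6)] show False .
qed

lemma pigeon:
  assumes A: "\<forall>x\<in>A. \<forall>y\<in>A. x \<noteq> y \<longrightarrow> R x y" and B: "\<forall>x\<in>B. \<forall>y\<in>B. x \<noteq> y \<longrightarrow> R x y"
    and C: "\<forall>x\<in>C. \<forall>y\<in>C. x \<noteq> y \<longrightarrow> R x y"
    and m: "c1 \<in> A \<union> B \<union> C" "c2 \<in> A \<union> B \<union> C" "c3 \<in> A \<union> B \<union> C" "c4 \<in> A \<union> B \<union> C"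
    and ne: "c1 \<noteq> c2" "c1 \<noteq> c3" "c1 \<noteq> c4" "c2 \<noteq> c3" "c2 \<noteq> c4" "c3 \<noteq> c4"
    and nr: "\<not> R c1 c2" "\<not> R c1 c3" "\<not> R c1 c4" "\<not> R c2 c3" "\<not> R c2 c4" "\<not> R c3 c4"
  shows False
proof -
  have m': "c2 \<in> A \<union> B \<union> C" "c3 \<in> A \<union> B \<union> C" "c4 \<in> A \<union> B \<union> C"
    "c2 \<in> B \<union> A \<union> C" "c3 \<in> B \<union> A \<union> C" "c4 \<in> B \<union> A \<union> C"
    "c2 \<in> C \<union> A \<union> B" "c3 \<in> C \<union> A \<union> B" "c4 \<in> C \<union> A \<union> B" using m by auto
  consider "c1 \<in> A" | "c1 \<in> B" | "c1 \<in> C" using m(1) by blast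
  then show False
  proof cases
    case 1 from pig3[OF A B C 1 m'(1,2,3) ne nr] show False .
  next
    case 2 from pig3[OF B A C 2 m'(4,5,6) ne nr] show False .
  next
    case 3 from pig3[OF C A B 3 m'(7,8,9) ne nr] show False .
  qed
qed

theorem lemma11:
  fixes m n :: nat
  shows
  \<comment> \<open>(i)\<close>
  "(\<forall>u v. sr_adj m n u v \<longrightarrow>
      (\<exists>C :: nat \<Rightarrow> (nat \<Rightarrow> nat) set.
         (\<forall>t\<in>{1,2,3}. unique_largest_clique m n t u v (C t)) \<and>
         (\<forall>s\<in>{1,2,3}. \<forall>t\<in>{1,2,3}. s \<noteq> t \<longrightarrow> C s \<inter> C t = {u, v}) \<and>
         (\<forall>w. sr_adj m n u w \<and> sr_adj m n v w \<longrightarrow> w \<in> C 1 \<union> C 2 \<union> C 3)))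
   \<and>
  \<comment> \<open>(ii)\<close>
   (\<forall>u. sr_vert m n u \<longrightarrow>
      (\<forall>t\<in>{1,2,3}.
         (\<forall>C. maximal_clique_at m n t u C \<longrightarrow> C - {u} \<subseteq> {w. sr_adj m n u w}) \<and>
         (\<forall>w. sr_adj m n u w \<longrightarrow> (\<exists>!C. maximal_clique_at m n t u C \<and> w \<in> C - {u}))) \<and>
      (\<forall>w1 w2. sr_adj m n u w1 \<and> sr_adj m n u w2 \<and> sr_adj m n w1 w2 \<longrightarrow>
         (\<exists>!C. (\<exists>t\<in>{1,2,3}. maximal_clique_at m n t u C) \<and> w1 \<in> C \<and> w2 \<in> C) \<and>
         (\<exists>!t. t \<in> {1,2,3} \<and> (\<exists>C. maximal_clique_at m n t u C \<and> w1 \<in> C \<and> w2 \<in> C))))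
   \<and>
  \<comment> \<open>(iii) no induced K_{1,1,4}\<close>
   \<not> (\<exists>a b c1 c2 c3 c4.
        sr_adj m n a b \<and>
        (\<forall>c\<in>{c1,c2,c3,c4}. sr_adj m n a c \<and> sr_adj m n b c) \<and>
        c1 \<noteq> c2 \<and> c1 \<noteq> c3 \<and> c1 \<noteq> c4 \<and> c2 \<noteq> c3 \<and> c2 \<noteq> c4 \<and> c3 \<noteq> c4 \<and>
        (\<forall>c\<in>{c1,c2,c3,c4}. \<forall>d\<in>{c1,c2,c3,c4}. \<not> sr_adj m n c d))"
proof (intro conjI)
  show "\<forall>u v. sr_adj m n u v \<longrightarrow>
      (\<exists>C :: nat \<Rightarrow> (nat \<Rightarrow> nat) set.
         (\<forall>t\<in>{1,2,3}. unique_largest_clique m n t u v (C t)) \<and>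
         (\<forall>s\<in>{1,2,3}. \<forall>t\<in>{1,2,3}. s \<noteq> t \<longrightarrow> C s \<inter> C t = {u, v}) \<and>
         (\<forall>w. sr_adj m n u w \<and> sr_adj m n v w \<longrightarrow> w \<in> C 1 \<union> C 2 \<union> C 3))"
  proof (intro allI impI)
    fix u v assume a: "sr_adj m n u v"
    then obtain j k d where "ap m n u v j k d" using orient by blast
    then interpret ap m n u v j k d .
    show "\<exists>C :: nat \<Rightarrow> (nat \<Rightarrow> nat) set.
         (\<forall>t\<in>{1,2,3}. unique_largest_clique m n t u v (C t)) \<and>
         (\<forall>s\<in>{1,2,3}. \<forall>t\<in>{1,2,3}. s \<noteq> t \<longrightarrow> C s \<inter> C t = {u, v}) \<and>
         (\<forall>w. sr_adj m n u w \<and> sr_adj m n v w \<longrightarrow> w \<in> C 1 \<union> C 2 \<union> C 3)"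
    proof (intro exI[of _ Cf] conjI)
      show "\<forall>t\<in>{1,2,3}. unique_largest_clique m n t u v (Cf t)" using Cf_ul by blast
      show "\<forall>s\<in>{1,2,3}. \<forall>t\<in>{1,2,3}. s \<noteq> t \<longrightarrow> Cf s \<inter> Cf t = {u, v}" using Cf_int by blast
      show "\<forall>w. sr_adj m n u w \<and> sr_adj m n v w \<longrightarrow> w \<in> Cf 1 \<union> Cf 2 \<union> Cf 3" using Cf_cn by blast
    qed
  qed
next
  show "\<forall>u. sr_vert m n u \<longrightarrow>
      (\<forall>t\<in>{1,2,3}.
         (\<forall>C. maximal_clique_at m n t u C \<longrightarrow> C - {u} \<subseteq> {w. sr_adj m n u w}) \<and>
         (\<forall>w. sr_adj m n u w \<longrightarrow> (\<exists>!C. maximal_clique_at m n t u C \<and> w \<in> C - {u}))) \<and>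
      (\<forall>w1 w2. sr_adj m n u w1 \<and> sr_adj m n u w2 \<and> sr_adj m n w1 w2 \<longrightarrow>
         (\<exists>!C. (\<exists>t\<in>{1,2,3}. maximal_clique_at m n t u C) \<and> w1 \<in> C \<and> w2 \<in> C) \<and>
         (\<exists>!t. t \<in> {1,2,3} \<and> (\<exists>C. maximal_clique_at m n t u C \<and> w1 \<in> C \<and> w2 \<in> C)))"
  proof (intro allI impI conjI ballI)
    fix u C and t :: nat assume "maximal_clique_at m n t u C"
    then have "sr_clique m n C" "u \<in> C" using ct_clique unfolding maximal_clique_at_def by blast+
    then have A: "\<forall>x\<in>C. \<forall>y\<in>C. x \<noteq> y \<longrightarrow> sr_adj m n x y" "u \<in> C" unfolding sr_clique_def by blast+
    show "C - {u} \<subseteq> {w. sr_adj m n u w}"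
    proof
      fix w assume "w \<in> C - {u}"
      then show "w \<in> {w. sr_adj m n u w}" using A(1)[rule_format, of u w] A(2) by auto
    qed
  next
    fix u w and t :: nat assume t: "t \<in> {1,2,3}" and adj: "sr_adj m n u w"
    then obtain j k d where "ap m n u w j k d" using orient by blast
    then interpret ap m n u w j k d .
    show "\<exists>!C. maximal_clique_at m n t u C \<and> w \<in> C - {u}"
    proof (rule ex1I[of _ "Cf t"])
      show "maximal_clique_at m n t u (Cf t) \<and> w \<in> Cf t - {u}" using Cf_max[OF t] Cf_uv uv by auto
      fix C assume "maximal_clique_at m n t u C \<and> w \<in> C - {u}"
      then show "C = Cf t" using max_eq by blast
    qed
  next
    fix u w1 w2 assume h: "sr_adj m n u w1 \<and> sr_adj m n u w2 \<and> sr_adj m n w1 w2"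
    then obtain j k d where "ap m n u w1 j k d" using orient by blast
    then interpret ap m n u w1 j k d .
    have "w2 \<in> Cf 1 \<union> Cf 2 \<union> Cf 3" using Cf_cn h by blast
    then obtain t0 where t0: "t0 \<in> {1,2,3}" "w2 \<in> Cf t0" by blast
    have ne: "w2 \<noteq> u" "w2 \<noteq> w1" using h adj_irr by metis+
    have key: "s = t0 \<and> C = Cf t0" if "maximal_clique_at m n s u C" "w1 \<in> C" "w2 \<in> C" for s C
    proof -
      have C: "C = Cf s" using max_eq that by blast
      have s: "s \<in> {1,2,3}" using that(1) unfolding maximal_clique_at_def ct_cases by auto
      have "s = t0"
      proof (rule ccontr)
        assume "s \<noteq> t0"
        then have "Cf s \<inter> Cf t0 = {u, w1}" using Cf_int s t0(1) by blast
        then show False using t0(2) that(3) C ne by blast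
      qed
      then show ?thesis using C by simp
    qed
    have m0: "maximal_clique_at m n t0 u (Cf t0)" "w1 \<in> Cf t0" using Cf_max[OF t0(1)] Cf_uv by auto
    show "\<exists>!C. (\<exists>t\<in>{1,2,3}. maximal_clique_at m n t u C) \<and> w1 \<in> C \<and> w2 \<in> C"
    proof (rule ex1I[of _ "Cf t0"])
      show "(\<exists>t\<in>{1,2,3}. maximal_clique_at m n t u (Cf t0)) \<and> w1 \<in> Cf t0 \<and> w2 \<in> Cf t0"
        using m0 t0 by blast
      fix C assume "(\<exists>t\<in>{1,2,3}. maximal_clique_at m n t u C) \<and> w1 \<in> C \<and> w2 \<in> C"
      then obtain s where "maximal_clique_at m n s u C" "w1 \<in> C" "w2 \<in> C" by blast
      from key[OF this] show "C = Cf t0" by simp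
    qed
    show "\<exists>!t. t \<in> {1,2,3} \<and> (\<exists>C. maximal_clique_at m n t u C \<and> w1 \<in> C \<and> w2 \<in> C)"
    proof (rule ex1I[of _ t0])
      show "t0 \<in> {1,2,3} \<and> (\<exists>C. maximal_clique_at m n t0 u C \<and> w1 \<in> C \<and> w2 \<in> C)"
        using m0 t0 by blast
      fix s assume "s \<in> {1,2,3} \<and> (\<exists>C. maximal_clique_at m n s u C \<and> w1 \<in> C \<and> w2 \<in> C)"
      then obtain C where "maximal_clique_at m n s u C" "w1 \<in> C" "w2 \<in> C" by blast
      from key[OF this] show "s = t0" by simp
    qed
  qed
next
  show "\<not> (\<exists>a b c1 c2 c3 c4.
        sr_adj m n a b \<and>
        (\<forall>c\<in>{c1,c2,c3,c4}. sr_adj m n a c \<and> sr_adj m n b c) \<and>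
        c1 \<noteq> c2 \<and> c1 \<noteq> c3 \<and> c1 \<noteq> c4 \<and> c2 \<noteq> c3 \<and> c2 \<noteq> c4 \<and> c3 \<noteq> c4 \<and>
        (\<forall>c\<in>{c1,c2,c3,c4}. \<forall>d\<in>{c1,c2,c3,c4}. \<not> sr_adj m n c d))"
  proof
    assume "\<exists>a b c1 c2 c3 c4.
        sr_adj m n a b \<and>
        (\<forall>c\<in>{c1,c2,c3,c4}. sr_adj m n a c \<and> sr_adj m n b c) \<and>
        c1 \<noteq> c2 \<and> c1 \<noteq> c3 \<and> c1 \<noteq> c4 \<and> c2 \<noteq> c3 \<and> c2 \<noteq> c4 \<and> c3 \<noteq> c4 \<and>
        (\<forall>c\<in>{c1,c2,c3,c4}. \<forall>d\<in>{c1,c2,c3,c4}. \<not> sr_adj m n c d)"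
    then obtain a b c1 c2 c3 c4 where H: "sr_adj m n a b \<and>
        (\<forall>c\<in>{c1,c2,c3,c4}. sr_adj m n a c \<and> sr_adj m n b c) \<and>
        c1 \<noteq> c2 \<and> c1 \<noteq> c3 \<and> c1 \<noteq> c4 \<and> c2 \<noteq> c3 \<and> c2 \<noteq> c4 \<and> c3 \<noteq> c4 \<and>
        (\<forall>c\<in>{c1,c2,c3,c4}. \<forall>d\<in>{c1,c2,c3,c4}. \<not> sr_adj m n c d)" by (elim exE)
    have ab: "sr_adj m n a b" using H by (elim conjE)
    have cc: "\<forall>c\<in>{c1,c2,c3,c4}. sr_adj m n a c \<and> sr_adj m n b c" using H by (elim conjE)
    have ne: "c1 \<noteq> c2" "c1 \<noteq> c3" "c1 \<noteq> c4" "c2 \<noteq> c3" "c2 \<noteq> c4" "c3 \<noteq> c4"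
      using H by simp_all
    have na: "\<forall>c\<in>{c1,c2,c3,c4}. \<forall>d\<in>{c1,c2,c3,c4}. \<not> sr_adj m n c d" using H by (elim conjE)
    obtain j k d where "ap m n a b j k d" using orient[OF ab] by blast
    then interpret ap m n a b j k d .
    have cl: "\<forall>x\<in>Cf t. \<forall>y\<in>Cf t. x \<noteq> y \<longrightarrow> sr_adj m n x y" if "t \<in> {1,2,3}" for t
      using ct_clique[OF Cf_type[OF that]] unfolding sr_clique_def by blast
    have mem: "c \<in> Cf 1 \<union> Cf 2 \<union> Cf 3" if "c \<in> {c1,c2,c3,c4}" for c
    proof -
      have "sr_adj m n a c \<and> sr_adj m n b c" using cc that by blast
      then show ?thesis using Cf_cn by blast
    qed
    have t: "(1::nat) \<in> {1,2,3}" "(2::nat) \<in> {1,2,3}" "(3::nat) \<in> {1,2,3}" by auto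
    have nn: "\<not> sr_adj m n c1 c2" "\<not> sr_adj m n c1 c3" "\<not> sr_adj m n c1 c4"
      "\<not> sr_adj m n c2 c3" "\<not> sr_adj m n c2 c4" "\<not> sr_adj m n c3 c4" using na by simp_all
    have mm: "c1 \<in> Cf 1 \<union> Cf 2 \<union> Cf 3" "c2 \<in> Cf 1 \<union> Cf 2 \<union> Cf 3"
      "c3 \<in> Cf 1 \<union> Cf 2 \<union> Cf 3" "c4 \<in> Cf 1 \<union> Cf 2 \<union> Cf 3" using mem by simp_all
    show False
      by (rule pigeon[where R="sr_adj m n", OF cl[OF t(1)] cl[OF t(2)] cl[OF t(3)] mm ne nn])
  qed
qed

end
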